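(* Let $b\ge0$, $c\ge0$, $1\le a\le c+1$, and $f\in\mathbb{F}_q[x_1,\dots,x_c]$. If $\delta_{a;b}(f)$ is a polynomial, then $\delta_{a';b}(f)$ is a polynomial for every integer $1\le a'<a$.
   Context: $q$ is a power of a prime. Delta operators: for integers $b\ge0$, $c\ge0$, $1\le a\le c+1$, $\delta_{a;b}:\mathbb{F}_q(x_1,\dots,x_c)\to\mathbb{F}_q(x_1,\dots,x_{c+1})$ sends $f$ to $N/L(x_1,\dots,x_a)$, where $N$ is the $a\times a$ determinant whose $t$-th row is $(x_1^{q^{t-1}},\dots,x_a^{q^{t-1}})$ for $t=1,\dots,a-1$ and whose last row is $(x_1^{q^b}f(\hat x_1),\dots,x_a^{q^b}f(\hat x_a))$, with $f(\hat x_i)=f(x_1,\dots,x_{i-1},x_{i+1},\dots,x_{c+1})$, and $L(x_1,\dots,x_a)=\det(x_j^{q^{t-1}})_{1\le t,j\le a}$. *)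

theory Defs
  imports "HOL-Library.Poly_Mapping" "HOL-Computational_Algebra.Fraction_Field"
          "Jordan_Normal_Form.Determinant"
begin

text \<open>Multivariate polynomials over a field 'a in the variables x_1, x_2, ...
  represented as (nat =>0 nat) =>0 'a; variable x_(j+1) is index j (0-based).\<close>

type_synonym 'a mpoly = "(nat \<Rightarrow>\<^sub>0 nat) \<Rightarrow>\<^sub>0 'a"

definition mvar :: "nat \<Rightarrow> 'a::comm_ring_1 mpoly" where
  "mvar j = Poly_Mapping.single (Poly_Mapping.single j 1) 1"

definition mconst :: "'a::comm_ring_1 \<Rightarrow> 'a mpoly" where
  "mconst c = Poly_Mapping.single 0 c"

definition mvars :: "'a::comm_ring_1 mpoly \<Rightarrow> nat set" where
  "mvars p = \<Union> (Poly_Mapping.keys ` Poly_Mapping.keys p)"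

definition msubst :: "(nat \<Rightarrow> 'a::comm_ring_1 mpoly) \<Rightarrow> 'a mpoly \<Rightarrow> 'a mpoly" where
  "msubst \<sigma> p = (\<Sum>m\<in>Poly_Mapping.keys p.
      mconst (Poly_Mapping.lookup p m) *
      (\<Prod>v\<in>Poly_Mapping.keys m. \<sigma> v ^ Poly_Mapping.lookup m v))"

text \<open>f(hat x_i) for column index k = i-1 (0-based): x_1..x_(i-1) stay,
  the remaining variables shift by one.\<close>
definition omit_var :: "nat \<Rightarrow> 'a::comm_ring_1 mpoly \<Rightarrow> 'a mpoly" where
  "omit_var k f = msubst (\<lambda>j. mvar (if j < k then j else Suc j)) f"

definition mooreL :: "nat \<Rightarrow> 'a::{finite,field} mpoly" where
  "mooreL a = det (mat a a (\<lambda>(r, k). mvar k ^ (card (UNIV :: 'a set) ^ r)))"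

definition deltaN :: "nat \<Rightarrow> nat \<Rightarrow> 'a::{finite,field} mpoly \<Rightarrow> 'a mpoly" where
  "deltaN a b f = det (mat a a (\<lambda>(r, k).
      if r < a - 1 then mvar k ^ (card (UNIV :: 'a set) ^ r)
      else mvar k ^ (card (UNIV :: 'a set) ^ b) * omit_var k f))"

definition delta :: "nat \<Rightarrow> nat \<Rightarrow> 'a::{finite,field} mpoly \<Rightarrow> 'a mpoly fract" where
  "delta a b f = Fract (deltaN a b f) (mooreL a)"

definition is_poly_in :: "nat \<Rightarrow> 'a::{finite,field} mpoly fract \<Rightarrow> bool" where
  "is_poly_in n r \<longleftrightarrow> (\<exists>p. mvars p \<subseteq> {..<n} \<and> r = Fract p 1)"

end

theory Submission
  imports Defs "HOL-Computational_Algebra.Polynomial"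
begin


definition mv :: "(nat \<Rightarrow> 'b::comm_ring_1) \<Rightarrow> (nat \<Rightarrow>\<^sub>0 nat) \<Rightarrow> 'b" where
  "mv \<sigma> m = (\<Prod>v\<in>Poly_Mapping.keys m. \<sigma> v ^ Poly_Mapping.lookup m v)"

definition meval :: "('a::comm_ring_1 \<Rightarrow> 'b::comm_ring_1) \<Rightarrow> (nat \<Rightarrow> 'b) \<Rightarrow> 'a mpoly \<Rightarrow> 'b" where
  "meval \<kappa> \<sigma> p = (\<Sum>m\<in>Poly_Mapping.keys p. \<kappa> (Poly_Mapping.lookup p m) * mv \<sigma> m)"

lemma mv_superset:
  assumes "finite S" "Poly_Mapping.keys m \<subseteq> S"
  shows "mv \<sigma> m = (\<Prod>v\<in>S. \<sigma> v ^ Poly_Mapping.lookup m v)"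
  unfolding mv_def
  by (rule prod.mono_neutral_left) (use assms in \<open>auto simp: in_keys_iff\<close>)

lemma mv_zero[simp]: "mv \<sigma> 0 = 1" by (simp add: mv_def)

lemma mv_add: "mv \<sigma> (m + m') = mv \<sigma> m * mv \<sigma> m'"
proof -
  let ?S = "Poly_Mapping.keys m \<union> Poly_Mapping.keys m'"
  have f: "finite ?S" by simp
  have "mv \<sigma> (m + m') = (\<Prod>v\<in>?S. \<sigma> v ^ Poly_Mapping.lookup (m+m') v)"
    by (rule mv_superset[OF f]) (rule keys_add)
  also have "\<dots> = (\<Prod>v\<in>?S. \<sigma> v ^ Poly_Mapping.lookup m v) * (\<Prod>v\<in>?S. \<sigma> v ^ Poly_Mapping.lookup m' v)"
    by (simp add: lookup_add power_add prod.distrib)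
  also have "\<dots> = mv \<sigma> m * mv \<sigma> m'"
    by (simp add: mv_superset[OF f])
  finally show ?thesis .
qed

lemma mv_single: "mv \<sigma> (Poly_Mapping.single v k) = \<sigma> v ^ k"
  by (cases "k = 0") (auto simp: mv_def)

lemma meval_superset:
  assumes "finite S" "Poly_Mapping.keys p \<subseteq> S" "\<kappa> 0 = 0"
  shows "meval \<kappa> \<sigma> p = (\<Sum>m\<in>S. \<kappa> (Poly_Mapping.lookup p m) * mv \<sigma> m)"
  unfolding meval_def
  by (rule sum.mono_neutral_left) (use assms in \<open>auto simp: in_keys_iff\<close>)

lemma meval_add:
  assumes "comm_ring_hom \<kappa>"
  shows "meval \<kappa> \<sigma> (p + q) = meval \<kappa> \<sigma> p + meval \<kappa> \<sigma> q"
proof -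
  interpret comm_ring_hom \<kappa> by fact
  let ?S = "Poly_Mapping.keys p \<union> Poly_Mapping.keys q"
  have f: "finite ?S" by simp
  have "meval \<kappa> \<sigma> (p + q) = (\<Sum>m\<in>?S. \<kappa> (Poly_Mapping.lookup (p+q) m) * mv \<sigma> m)"
    by (rule meval_superset[OF f]) (rule keys_add, simp)
  also have "\<dots> = (\<Sum>m\<in>?S. \<kappa> (Poly_Mapping.lookup p m) * mv \<sigma> m) + (\<Sum>m\<in>?S. \<kappa> (Poly_Mapping.lookup q m) * mv \<sigma> m)"
    by (simp add: lookup_add hom_add distrib_right sum.distrib)
  also have "\<dots> = meval \<kappa> \<sigma> p + meval \<kappa> \<sigma> q"
    by (simp add: meval_superset[OF f])
  finally show ?thesis .
qed

lemma meval_zero[simp]: "meval \<kappa> \<sigma> 0 = 0" by (simp add: meval_def)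

lemma meval_single:
  assumes "\<kappa> 0 = 0"
  shows "meval \<kappa> \<sigma> (Poly_Mapping.single m c) = \<kappa> c * mv \<sigma> m"
  by (cases "c = 0") (auto simp: meval_def assms)

lemma poly_mapping_sum_singles:
  "p = (\<Sum>m\<in>Poly_Mapping.keys p. Poly_Mapping.single m (Poly_Mapping.lookup p m))"
  by (rule poly_mapping_eqI) (auto simp: lookup_sum lookup_single when_def in_keys_iff
      sum.delta'[where a=k for k] intro: sym cong: sum.cong)

lemma meval_sum:
  assumes "comm_ring_hom \<kappa>"
  shows "meval \<kappa> \<sigma> (sum f I) = (\<Sum>i\<in>I. meval \<kappa> \<sigma> (f i))"
  by (induction I rule: infinite_finite_induct) (auto simp: meval_add[OF assms])

lemma meval_mult:
  assumes "comm_ring_hom \<kappa>"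
  shows "meval \<kappa> \<sigma> (p * q) = meval \<kappa> \<sigma> p * meval \<kappa> \<sigma> q"
proof -
  interpret comm_ring_hom \<kappa> by fact
  let ?P = "Poly_Mapping.keys p" and ?Q = "Poly_Mapping.keys q"
  let ?lp = "Poly_Mapping.lookup p" and ?lq = "Poly_Mapping.lookup q"
  have "p * q = (\<Sum>m\<in>?P. Poly_Mapping.single m (?lp m)) * (\<Sum>m\<in>?Q. Poly_Mapping.single m (?lq m))"
    using poly_mapping_sum_singles[of p] poly_mapping_sum_singles[of q] by simp
  also have "\<dots> = (\<Sum>m\<in>?P. \<Sum>m'\<in>?Q. Poly_Mapping.single (m + m') (?lp m * ?lq m'))"
    by (simp add: sum_product mult_single)
  finally have pq: "p * q = \<dots>" .
  have "meval \<kappa> \<sigma> (p * q) = (\<Sum>m\<in>?P. \<Sum>m'\<in>?Q. \<kappa> (?lp m) * mv \<sigma> m * (\<kappa> (?lq m') * mv \<sigma> m'))"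
    unfolding pq by (simp add: meval_sum[OF assms] meval_single mv_add hom_mult mult_ac)
  also have "\<dots> = (\<Sum>m\<in>?P. \<kappa> (?lp m) * mv \<sigma> m) * (\<Sum>m'\<in>?Q. \<kappa> (?lq m') * mv \<sigma> m')"
    by (simp add: sum_product)
  also have "\<dots> = meval \<kappa> \<sigma> p * meval \<kappa> \<sigma> q" by (simp add: meval_def)
  finally show ?thesis .
qed

lemma meval_one:
  assumes "comm_ring_hom \<kappa>"
  shows "meval \<kappa> \<sigma> 1 = 1"
proof -
  interpret comm_ring_hom \<kappa> by fact
  have "(1::'a mpoly) = Poly_Mapping.single 0 1" by simp
  then show ?thesis by (metis meval_single hom_zero hom_one mv_zero mult_1)
qed

lemma meval_hom:
  assumes "comm_ring_hom \<kappa>"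
  shows "comm_ring_hom (meval \<kappa> \<sigma>)"
  by unfold_locales (auto simp: meval_add[OF assms] meval_mult[OF assms] meval_one[OF assms])

lemma mconst_hom: "comm_ring_hom (mconst :: 'a::comm_ring_1 \<Rightarrow> 'a mpoly)"
  by unfold_locales (auto simp: mconst_def single_add mult_single)

lemma meval_mvar: "\<kappa> 0 = 0 \<Longrightarrow> \<kappa> 1 = 1 \<Longrightarrow> meval \<kappa> \<sigma> (mvar j) = \<sigma> j"
  by (simp add: mvar_def meval_single mv_single)

lemma meval_mconst: "\<kappa> 0 = 0 \<Longrightarrow> meval \<kappa> \<sigma> (mconst c) = \<kappa> c"
  by (simp add: mconst_def meval_single)

lemma meval_comp:
  assumes "comm_ring_hom h"
  shows "h (meval \<kappa> \<sigma> p) = meval (h \<circ> \<kappa>) (h \<circ> \<sigma>) p"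
proof -
  interpret comm_ring_hom h by fact
  show ?thesis unfolding meval_def mv_def by (simp add: hom_distribs)
qed

lemma meval_cong:
  assumes "\<And>v. v \<in> mvars p \<Longrightarrow> \<sigma> v = \<sigma>' v"
  shows "meval \<kappa> \<sigma> p = meval \<kappa> \<sigma>' p"
  unfolding meval_def mv_def
  by (intro sum.cong refl arg_cong2[where f="(*)"] prod.cong) (use assms in \<open>force simp: mvars_def\<close>)

lemma mvar_power: "mvar v ^ k = Poly_Mapping.single (Poly_Mapping.single v k) (1::'a::comm_ring_1)"
  by (induction k) (auto simp: mvar_def mult_single single_add[symmetric] add.commute)

lemma prod_mvar_power:
  assumes "finite K"
  shows "(\<Prod>v\<in>K. (mvar v :: 'a::comm_ring_1 mpoly) ^ e v)
      = Poly_Mapping.single (\<Sum>v\<in>K. Poly_Mapping.single v (e v)) 1"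
  using assms
proof (induction rule: finite_induct)
  case (insert x F)
  then show ?case by (simp add: mvar_power mult_single)
qed simp

lemma mv_mvar: "mv mvar m = (Poly_Mapping.single m (1::'a::comm_ring_1))"
  unfolding mv_def prod_mvar_power[OF finite_keys] using poly_mapping_sum_singles[of m] by simp

lemma meval_id: "meval mconst mvar p = (p :: 'a::comm_ring_1 mpoly)"
proof -
  have "meval mconst mvar p = (\<Sum>m\<in>Poly_Mapping.keys p. Poly_Mapping.single m (Poly_Mapping.lookup p m))"
    unfolding meval_def mv_mvar by (simp add: mconst_def mult_single)
  then show ?thesis using poly_mapping_sum_singles[of p] by simp
qed

lemma msubst_meval: "msubst \<sigma> = meval mconst \<sigma>"
  by (auto simp: msubst_def meval_def mv_def fun_eq_iff)


lemma mv_restrict: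
  "mv (\<lambda>v. if v \<in> S then mvar v else 0) m =
     (if Poly_Mapping.keys m \<subseteq> S then Poly_Mapping.single m (1::'a::comm_ring_1) else 0)"
proof (cases "Poly_Mapping.keys m \<subseteq> S")
  case True
  have "mv (\<lambda>v. if v \<in> S then mvar v else 0) m = mv mvar m"
    unfolding mv_def by (rule prod.cong) (use True in auto)
  then show ?thesis using True by (simp add: mv_mvar)
next
  case False
  then obtain v where v: "v \<in> Poly_Mapping.keys m" "v \<notin> S" by auto
  then have "Poly_Mapping.lookup m v \<noteq> 0" by (simp add: in_keys_iff)
  then have z: "(if v \<in> S then mvar v else 0) ^ Poly_Mapping.lookup m v = (0::'a mpoly)" using v by (simp add: zero_power)
  have "mv (\<lambda>v. if v \<in> S then mvar v else 0) m = (0::'a mpoly)"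
    unfolding mv_def by (rule prod_zero[OF finite_keys]) (use v(1) z in blast)
  then show ?thesis using False by simp
qed

lemma restrict_fixed_imp_mvars:
  assumes "meval mconst (\<lambda>v. if v \<in> S then mvar v else 0) p = (p :: 'a::comm_ring_1 mpoly)"
  shows "mvars p \<subseteq> S"
proof
  fix v assume "v \<in> mvars p"
  then obtain m where m: "m \<in> Poly_Mapping.keys p" "v \<in> Poly_Mapping.keys m" by (auto simp: mvars_def)
  show "v \<in> S"
  proof (rule ccontr)
    assume "v \<notin> S"
    then have nS: "\<not> Poly_Mapping.keys m \<subseteq> S" using m by auto
    have "Poly_Mapping.lookup p m = Poly_Mapping.lookup (meval mconst (\<lambda>v. if v \<in> S then mvar v else 0) p) m"
      using assms by simp
    also have "\<dots> = (\<Sum>m'\<in>Poly_Mapping.keys p. Poly_Mapping.lookup (mconst (Poly_Mapping.lookup p m') *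
        (if Poly_Mapping.keys m' \<subseteq> S then Poly_Mapping.single m' 1 else 0)) m)"
      unfolding meval_def mv_restrict by (simp add: lookup_sum)
    also have "\<dots> = 0"
      by (rule sum.neutral) (use nS in \<open>auto simp: mconst_def mult_single lookup_single when_def\<close>)
    finally show False using m(1) by (simp add: in_keys_iff)
  qed
qed

lemma card_ge2: "card (UNIV :: 'a::{finite,field} set) \<ge> 2"
proof -
  have "{0, 1} \<subseteq> (UNIV :: 'a set)" by auto
  then have "card {0, 1::'a} \<le> card (UNIV :: 'a set)" by (intro card_mono) auto
  then show ?thesis by simp
qed

lemma card_pos: "card (UNIV :: 'a::{finite,field} set) > 0"
  using card_ge2[where 'a='a] by simp

lemma card_pow_pos: "card (UNIV :: 'a::{finite,field} set) ^ r > 0"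
  using card_pos[where 'a='a] by simp

lemma fin_field_pow_card:
  fixes x :: "'a::{finite,field}"
  shows "x ^ card (UNIV :: 'a set) = x"
proof (cases "x = 0")
  case False
  have "x * (\<Prod>y\<in>UNIV-{0}. x * y) = x * x ^ (card (UNIV :: 'a set) - 1) * \<Prod>(UNIV-{0})"
    by (simp add: prod.distrib mult_ac)
  also have "x * x ^ (card (UNIV :: 'a set) - 1) = x ^ Suc (card (UNIV :: 'a set) - 1)"
    by (subst power_Suc) auto
  also have "Suc (card (UNIV :: 'a set) - 1) = card (UNIV :: 'a set)"
    using finite_UNIV_card_ge_0[where ?'a = 'a] by simp
  also have "(\<Prod>y\<in>UNIV-{0}. x * y) = (\<Prod>y\<in>UNIV-{0}. y)"
    by (rule prod.reindex_bij_witness[of _ "\<lambda>y. y / x" "\<lambda>y. x * y"]) (use False in auto)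
  finally show ?thesis
    by simp
qed (use finite_UNIV_card_ge_0[where ?'a = 'a] in auto)

lemma fin_field_pow_card_pow:
  fixes x :: "'a::{finite,field}"
  shows "x ^ (card (UNIV :: 'a set) ^ r) = x"
  by (induction r) (simp_all add: fin_field_pow_card power_mult)

lemma choose_card_zero:
  assumes "0 < k" "k < card (UNIV :: 'a::{finite,field} set)"
  shows "of_nat (card (UNIV :: 'a set) choose k) = (0::'a)"
proof -
  define q where "q = card (UNIV :: 'a set)"
  define P :: "'a poly" where "P = [:1,1:] ^ q - monom 1 q - 1"
  have coeffP: "coeff P i = (if 0 < i \<and> i < q then of_nat (q choose i) else 0)" for i
  proof -
    have "coeff ([:1,1:] ^ q) i = (if i \<le> q then of_nat (q choose i) else (0::'a))"
    proof (cases "i \<le> q")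
      case True then show ?thesis by (simp add: coeff_linear_poly_power)
    next
      case False
      have "degree ([:1::'a,1:] ^ q) \<le> q"
        using degree_power_le[of "[:1::'a,1:]" q] by simp
      then show ?thesis using False by (simp add: coeff_eq_0)
    qed
    moreover have "q > 0" unfolding q_def using card_pos by auto
    ultimately show ?thesis
      unfolding P_def by (auto simp: coeff_monom coeff_1)
  qed
  have "P = 0"
  proof (rule ccontr)
    assume "P \<noteq> 0"
    have "degree P < q"
    proof -
      have "degree P \<le> q - 1"
        by (rule degree_le) (auto simp: coeffP)
      moreover have "q \<ge> 2" unfolding q_def using card_ge2 by simp
      ultimately show ?thesis by simp
    qed
    moreover have "{x. poly P x = 0} = UNIV"
      by (auto simp: P_def q_def fin_field_pow_card poly_monom)
    then have "card {x. poly P x = 0} = q" by (simp add: q_def)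
    ultimately show False using card_poly_roots_bound[OF \<open>P \<noteq> 0\<close>] by simp
  qed
  then have "coeff P k = 0" by simp
  then show ?thesis using assms by (simp add: coeffP q_def)
qed

lemma mpoly_of_nat: "(of_nat n :: 'a::comm_ring_1 mpoly) = mconst (of_nat n)"
  by (simp add: mconst_def)

lemma frob_add:
  fixes u v :: "'a::{finite,field} mpoly"
  shows "(u + v) ^ card (UNIV :: 'a set) = u ^ card (UNIV :: 'a set) + v ^ card (UNIV :: 'a set)"
proof -
  define q where "q = card (UNIV :: 'a set)"
  have q0: "q > 0" unfolding q_def using card_pos by auto
  have "(u + v) ^ q = (\<Sum>k\<le>q. of_nat (q choose k) * u ^ k * v ^ (q - k))"
    by (rule binomial_ring)
  also have "\<dots> = (\<Sum>k\<in>{0,q}. of_nat (q choose k) * u ^ k * v ^ (q - k))"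
  proof (intro sum.mono_neutral_right ballI)
    fix k assume "k \<in> {..q} - {0, q}"
    then have "0 < k" "k < q" by auto
    then have "of_nat (q choose k) = (0::'a mpoly)"
      unfolding mpoly_of_nat using choose_card_zero[where 'a='a, of k] by (simp add: q_def mconst_def)
    then show "of_nat (q choose k) * u ^ k * v ^ (q - k) = 0" by simp
  qed auto
  finally show ?thesis using q0 by (simp add: add_ac q_def)
qed

lemma frob_add_pow:
  fixes u v :: "'a::{finite,field} mpoly"
  shows "(u + v) ^ (card (UNIV :: 'a set) ^ r) = u ^ (card (UNIV :: 'a set) ^ r) + v ^ (card (UNIV :: 'a set) ^ r)"
proof (induction r)
  case (Suc r)
  have "(u + v) ^ (card (UNIV :: 'a set) ^ Suc r) = ((u + v) ^ (card (UNIV :: 'a set) ^ r)) ^ card (UNIV :: 'a set)"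
    by (simp add: power_mult[symmetric] mult.commute)
  also have "\<dots> = (u ^ (card (UNIV :: 'a set) ^ r) + v ^ (card (UNIV :: 'a set) ^ r)) ^ card (UNIV :: 'a set)"
    by (simp add: Suc)
  also have "\<dots> = u ^ (card (UNIV :: 'a set) ^ Suc r) + v ^ (card (UNIV :: 'a set) ^ Suc r)"
    by (simp add: frob_add power_mult[symmetric] mult.commute)
  finally show ?case .
qed simp

lemma frob_sum:
  fixes g :: "'b \<Rightarrow> 'a::{finite,field} mpoly"
  shows "(sum g I) ^ (card (UNIV :: 'a set) ^ r) = (\<Sum>i\<in>I. g i ^ (card (UNIV :: 'a set) ^ r))"
  by (induction I rule: infinite_finite_induct) (simp_all add: frob_add_pow card_pos)

lemma frob_lin:
  fixes c :: "nat \<Rightarrow> 'a::{finite,field}"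
  shows "(\<Sum>i\<in>I. mconst (c i) * mvar i) ^ (card (UNIV :: 'a set) ^ r)
       = (\<Sum>i\<in>I. mconst (c i) * mvar i ^ (card (UNIV :: 'a set) ^ r))"
proof -
  have "mconst (c i) ^ (card (UNIV :: 'a set) ^ r) = mconst (c i)" for i
  proof -
    interpret comm_ring_hom "mconst :: 'a \<Rightarrow> 'a mpoly" by (rule mconst_hom)
    show ?thesis by (simp add: hom_power[symmetric] fin_field_pow_card_pow)
  qed
  then show ?thesis by (simp add: frob_sum power_mult_distrib)
qed


definition lsum :: "(nat \<Rightarrow> 'a::comm_ring_1) \<Rightarrow> nat \<Rightarrow> 'a mpoly" where
  "lsum c j = (\<Sum>i<j. mconst (c i) * mvar i)"

definition lform :: "nat \<Rightarrow> (nat \<Rightarrow> 'a::comm_ring_1) \<Rightarrow> 'a mpoly" where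
  "lform j c = mvar j - lsum c j"

definition lsub :: "nat \<Rightarrow> (nat \<Rightarrow> 'a::comm_ring_1) \<Rightarrow> 'a mpoly \<Rightarrow> 'a mpoly" where
  "lsub j c = meval mconst (\<lambda>v. if v = j then lsum c j else mvar v)"

lemma lsub_hom: "comm_ring_hom (lsub j c)"
  unfolding lsub_def by (rule meval_hom[OF mconst_hom])

lemma mconst_0: "mconst 0 = 0" and mconst_1: "mconst 1 = 1"
  by (simp_all add: mconst_def)

lemma lsub_mvar[simp]: "lsub j c (mvar v) = (if v = j then lsum c j else mvar v)"
  unfolding lsub_def by (rule meval_mvar) (simp_all add: mconst_def)

lemma lsub_mconst[simp]: "lsub j c (mconst d) = mconst d"
  unfolding lsub_def by (rule meval_mconst) (simp add: mconst_def)

lemma lsub_lsum: "j' \<le> j \<Longrightarrow> lsub j c (lsum d j') = lsum d j'"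
proof -
  assume "j' \<le> j"
  interpret comm_ring_hom "lsub j c" by (rule lsub_hom)
  show ?thesis unfolding lsum_def using \<open>j' \<le> j\<close> by (simp add: hom_distribs)
qed

lemma lsub_lform_self: "lsub j c (lform j c) = 0"
proof -
  interpret comm_ring_hom "lsub j c" by (rule lsub_hom)
  show ?thesis unfolding lform_def by (simp add: hom_distribs lsub_lsum)
qed

lemma dvd_power_diff:
  fixes d :: "'b::comm_ring_1"
  assumes "d dvd x - y"
  shows "d dvd x ^ n - y ^ n"
proof (induction n)
  case (Suc n)
  have "x ^ Suc n - y ^ Suc n = x * (x ^ n - y ^ n) + (x - y) * y ^ n"
    by (simp add: algebra_simps)
  then show ?case using Suc assms by (simp add: dvd_add dvd_mult)
qed simp

lemma dvd_prod_diff: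
  fixes d :: "'b::comm_ring_1"
  assumes "finite K" "\<And>v. v \<in> K \<Longrightarrow> d dvd f v - g v"
  shows "d dvd (\<Prod>v\<in>K. f v) - (\<Prod>v\<in>K. g v)"
  using assms
proof (induction rule: finite_induct)
  case (insert x F)
  have "(\<Prod>v\<in>insert x F. f v) - (\<Prod>v\<in>insert x F. g v)
      = f x * ((\<Prod>v\<in>F. f v) - (\<Prod>v\<in>F. g v)) + (f x - g x) * (\<Prod>v\<in>F. g v)"
    using insert by (simp add: algebra_simps)
  then show ?case using insert by (simp add: dvd_add dvd_mult)
qed simp

lemma dvd_diff_meval:
  fixes P :: "'a::comm_ring_1 mpoly"
  assumes "\<And>v. d dvd mvar v - \<sigma> v"
  shows "d dvd P - meval mconst \<sigma> P"
proof -
  have "P - meval mconst \<sigma> P = meval mconst mvar P - meval mconst \<sigma> P"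
    by (simp add: meval_id)
  also have "\<dots> = (\<Sum>m\<in>Poly_Mapping.keys P. mconst (Poly_Mapping.lookup P m) * (mv mvar m - mv \<sigma> m))"
    unfolding meval_def by (simp add: sum_subtractf algebra_simps)
  finally have eq: "P - meval mconst \<sigma> P = \<dots>" .
  have "d dvd mv mvar m - mv \<sigma> m" for m
    unfolding mv_def by (intro dvd_prod_diff dvd_power_diff assms finite_keys)
  then show ?thesis unfolding eq by (intro dvd_sum dvd_mult) auto
qed

lemma lsub_zero_imp_dvd:
  assumes "lsub j c P = 0"
  shows "lform j c dvd P"
proof -
  have "lform j c dvd P - lsub j c P"
    unfolding lsub_def by (rule dvd_diff_meval) (auto simp: lform_def)
  then show ?thesis using assms by simp
qed

lemma dvd_imp_lsub_zero:
  assumes "lform j c dvd P"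
  shows "lsub j c P = 0"
proof -
  interpret comm_ring_hom "lsub j c" by (rule lsub_hom)
  from assms obtain Q where "P = lform j c * Q" by (auto simp: dvd_def)
  then show ?thesis by (simp add: hom_mult lsub_lform_self)
qed

lemma lookup_mconst_mult: "Poly_Mapping.lookup (mconst c * p) m = c * Poly_Mapping.lookup p m"
proof -
  have "mconst c * p = Poly_Mapping.map ((*) c) p"
    by (simp add: mconst_def mult_map_scale_conv_mult)
  then show ?thesis by (simp add: map.rep_eq when_def)
qed

lemma single_key_inj: "Poly_Mapping.single v (1::nat) = Poly_Mapping.single k 1 \<Longrightarrow> v = k"
  by (metis lookup_single_eq lookup_single_not_eq zero_neq_one)

lemma lookup_mvar1: "Poly_Mapping.lookup (mvar v) (Poly_Mapping.single k 1) = (if v = k then 1 else 0)"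
  using single_key_inj[of v k] by (auto simp: mvar_def lookup_single when_def)

lemma lookup_lin:
  assumes "finite I"
  shows "Poly_Mapping.lookup (\<Sum>i\<in>I. mconst (c i) * mvar (g i)) (Poly_Mapping.single k 1)
    = (\<Sum>i\<in>{i\<in>I. g i = k}. c i)"
proof -
  have "Poly_Mapping.lookup (\<Sum>i\<in>I. mconst (c i) * mvar (g i)) (Poly_Mapping.single k 1)
     = (\<Sum>i\<in>I. c i * (if g i = k then 1 else 0))"
    unfolding lookup_sum lookup_mconst_mult lookup_mvar1 ..
  also have "\<dots> = (\<Sum>i\<in>I. if g i = k then c i else 0)"
    by (rule sum.cong) auto
  also have "\<dots> = (\<Sum>i\<in>{i\<in>I. g i = k}. c i)"
    using assms by (simp add: sum.inter_filter)
  finally show ?thesis .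
qed


abbreviation Lam :: "nat \<Rightarrow> (nat \<Rightarrow> 'a) set" where
  "Lam j \<equiv> PiE {..<j} (\<lambda>_. UNIV)"

lemma lookup_lsum: "Poly_Mapping.lookup (lsum c j) (Poly_Mapping.single k 1) = (if k < j then c k else 0)"
proof -
  have "Poly_Mapping.lookup (lsum c j) (Poly_Mapping.single k 1) = (\<Sum>i\<in>{i\<in>{..<j}. i = k}. c i)"
    unfolding lsum_def using lookup_lin[of "{..<j}" c "\<lambda>i. i" k] by simp
  also have "{i\<in>{..<j}. i = k} = (if k < j then {k} else {})" by auto
  finally show ?thesis by simp
qed

lemma lookup_lsub_mvar:
  assumes "v \<le> j'" "j \<noteq> j'"
  shows "Poly_Mapping.lookup (lsub j c (mvar v)) (Poly_Mapping.single j' 1) = (if v = j' then 1 else 0)"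
  using assms lookup_lsum[of c j j'] lookup_mvar1[of v j'] by auto

lemma lsub_lform_ne:
  assumes "c \<in> Lam j" "d \<in> Lam j'" "(j, c) \<noteq> (j', d)"
  shows "lsub j c (lform j' d) \<noteq> (0 :: 'a::comm_ring_1 mpoly)"
proof (cases "j = j'")
  case False
  interpret comm_ring_hom "lsub j c" by (rule lsub_hom)
  have "lsub j c (lform j' d) = lsub j c (mvar j') - (\<Sum>i<j'. mconst (d i) * lsub j c (mvar i))"
    unfolding lform_def lsum_def by (simp add: hom_distribs)
  then have "Poly_Mapping.lookup (lsub j c (lform j' d)) (Poly_Mapping.single j' 1)
      = Poly_Mapping.lookup (lsub j c (mvar j')) (Poly_Mapping.single j' 1)
        - (\<Sum>i<j'. d i * Poly_Mapping.lookup (lsub j c (mvar i)) (Poly_Mapping.single j' 1))"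
    by (simp add: lookup_minus lookup_sum lookup_mconst_mult)
  also have "\<dots> = 1"
  proof -
    have "(\<Sum>i<j'. d i * Poly_Mapping.lookup (lsub j c (mvar i)) (Poly_Mapping.single j' 1)) = 0"
    proof (rule sum.neutral, rule ballI)
      fix i assume "i \<in> {..<j'}"
      then have h: "Poly_Mapping.lookup (lsub j c (mvar i)) (Poly_Mapping.single j' 1) = 0"
        using lookup_lsub_mvar[of i j' j c] False by (simp only: lessThan_iff less_imp_le if_False) (simp add: if_False)
      show "d i * Poly_Mapping.lookup (lsub j c (mvar i)) (Poly_Mapping.single j' 1) = 0"
        by (simp only: h mult_zero_right)
    qed
    moreover have "Poly_Mapping.lookup (lsub j c (mvar j')) (Poly_Mapping.single j' 1) = 1"
      using False lookup_lsub_mvar[of j' j' j c] by simp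
    ultimately show ?thesis by simp
  qed
  finally show ?thesis by auto
next
  case True
  then have "c \<noteq> d" using assms by auto
  then obtain i where i: "c i \<noteq> d i" by auto
  have "i < j"
  proof (rule ccontr)
    assume "\<not> i < j"
    then have "c i = undefined" "d i = undefined" using assms True by (auto simp: PiE_def extensional_def)
    then show False using i by simp
  qed
  interpret comm_ring_hom "lsub j c" by (rule lsub_hom)
  have "lsub j c (lform j' d) = lsum c j - lsum d j"
    unfolding lform_def by (simp add: True[symmetric] hom_distribs lsub_lsum)
  then have "Poly_Mapping.lookup (lsub j c (lform j' d)) (Poly_Mapping.single i 1) = c i - d i"
    using \<open>i < j\<close> lookup_lsum[of c j i] lookup_lsum[of d j i] by (simp add: lookup_minus)
  then show ?thesis using i by auto
qed

lemma prod_lform_dvd: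
  fixes P :: "'a::{finite,field} mpoly"
  assumes "finite F"
    and "\<And>x y. x \<in> F \<Longrightarrow> y \<in> F \<Longrightarrow> x \<noteq> y \<Longrightarrow> lsub (fst x) (snd x) (lform (fst y) (snd y)) \<noteq> 0"
    and "\<And>x. x \<in> F \<Longrightarrow> lsub (fst x) (snd x) P = 0"
  shows "(\<Prod>y\<in>F. lform (fst y) (snd y)) dvd P"
  using assms
proof (induction rule: finite_induct)
  case (insert x F)
  then have "(\<Prod>y\<in>F. lform (fst y) (snd y)) dvd P" by blast
  then obtain Q where Q: "P = (\<Prod>y\<in>F. lform (fst y) (snd y)) * Q" by (auto simp: dvd_def)
  interpret comm_ring_hom "lsub (fst x) (snd x)" by (rule lsub_hom)
  have "lsub (fst x) (snd x) (\<Prod>y\<in>F. lform (fst y) (snd y)) = (\<Prod>y\<in>F. lsub (fst x) (snd x) (lform (fst y) (snd y)))"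
    by (simp add: hom_distribs)
  also have "\<dots> \<noteq> 0"
  proof -
    have "\<forall>y\<in>F. lsub (fst x) (snd x) (lform (fst y) (snd y)) \<noteq> 0"
    proof
      fix y assume "y \<in> F"
      then have "x \<noteq> y" using insert.hyps(2) by auto
      then show "lsub (fst x) (snd x) (lform (fst y) (snd y)) \<noteq> 0"
        using insert.prems(1)[of x y] \<open>y \<in> F\<close> by auto
    qed
    then show ?thesis using insert.hyps(1) by simp
  qed
  finally have ne: "lsub (fst x) (snd x) (\<Prod>y\<in>F. lform (fst y) (snd y)) \<noteq> 0" .
  have "0 = lsub (fst x) (snd x) P" using insert by auto
  also have "\<dots> = lsub (fst x) (snd x) (\<Prod>y\<in>F. lform (fst y) (snd y)) * lsub (fst x) (snd x) Q"
    by (simp add: Q hom_mult)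
  finally have "lsub (fst x) (snd x) Q = 0" using ne by simp
  then have "lform (fst x) (snd x) dvd Q" by (rule lsub_zero_imp_dvd)
  then show ?case using insert Q by (auto simp: mult_dvd_mono)
qed simp


lemma det_col_comb:
  fixes A :: "'b::comm_ring_1 mat"
  assumes A: "A \<in> carrier_mat n n" and nm: "n = Suc m" and j: "j < n" and I: "I \<subseteq> {..<n} - {j}"
    and col: "\<And>r. r < n \<Longrightarrow> A $$ (r,j) = (\<Sum>i\<in>I. c i * A $$ (r,i)) + (if r = m then d else 0)"
  shows "det A = d * cofactor A m j"
proof -
  have finI: "finite I" using I finite_subset by blast
  have zero: "(\<Sum>r<n. A $$ (r,i) * cofactor A r j) = 0" if i: "i \<in> I" for i
  proof -
    define B where "B = mat n n (\<lambda>(r,k). if k = j then A $$ (r,i) else A $$ (r,k))"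
    have B: "B \<in> carrier_mat n n" by (simp add: B_def)
    have iI: "i < n" "i \<noteq> j" using I i by auto
    have del: "mat_delete B r j = mat_delete A r j" if "r < n" for r
      unfolding mat_delete_def using A B nm
      by (intro eq_matI) (auto simp: B_def)
    have "det B = (\<Sum>r<n. B $$ (r,j) * cofactor B r j)"
      by (rule laplace_expansion_column[OF B j])
    also have "\<dots> = (\<Sum>r<n. A $$ (r,i) * cofactor A r j)"
      by (rule sum.cong) (use j del in \<open>auto simp: B_def cofactor_def\<close>)
    finally have "det B = \<dots>" .
    moreover have "det B = 0"
      by (rule det_identical_columns[OF B iI(2) iI(1) j]) (use iI j in \<open>auto simp: B_def col_def\<close>)
    ultimately show ?thesis by simp
  qed
  have "det A = (\<Sum>r<n. A $$ (r,j) * cofactor A r j)"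
    by (rule laplace_expansion_column[OF A j])
  also have "\<dots> = (\<Sum>r<n. ((\<Sum>i\<in>I. c i * A $$ (r,i)) + (if r = m then d else 0)) * cofactor A r j)"
    by (rule sum.cong) (auto simp: col)
  also have "\<dots> = (\<Sum>r<n. \<Sum>i\<in>I. c i * (A $$ (r,i) * cofactor A r j)) + (\<Sum>r<n. (if r = m then d else 0) * cofactor A r j)"
    by (simp only: distrib_right sum.distrib sum_distrib_right mult.assoc)
  also have "(\<Sum>r<n. \<Sum>i\<in>I. c i * (A $$ (r,i) * cofactor A r j)) = (\<Sum>i\<in>I. c i * (\<Sum>r<n. A $$ (r,i) * cofactor A r j))"
    by (subst sum.swap) (simp add: sum_distrib_left)
  also have "(\<Sum>r<n. (if r = m then d else 0) * cofactor A r j) = (\<Sum>r<n. if r = m then d * cofactor A r j else 0)"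
    by (rule sum.cong) auto
  also have "\<dots> = d * cofactor A m j" using nm by (simp add: sum.delta')
  also have "(\<Sum>i\<in>I. c i * (\<Sum>r<n. A $$ (r,i) * cofactor A r j)) = 0" using zero by simp
  finally show ?thesis by simp
qed


lemma cpoly_hom: "comm_ring_hom (\<lambda>x::'b::comm_ring_1. [:x:])"
proof
  fix x y :: 'b
  show "[:x + y:] = [:x:] + [:y:]" by simp
  show "[:x * y:] = [:x:] * [:y:]" by simp
  show "[:1::'b:] = 1" by (rule pCons_one)
  show "[:0::'b:] = 0" by simp
qed

lemma kappa_hom: "comm_ring_hom (\<lambda>c::'b::comm_ring_1. [:mconst c:])"
proof -
  interpret a: comm_ring_hom "mconst :: 'b \<Rightarrow> 'b mpoly" by (rule mconst_hom)
  interpret b: comm_ring_hom "\<lambda>x::'b mpoly. [:x:]" by (rule cpoly_hom)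
  show ?thesis
  proof
    fix x y :: 'b
    show "[:mconst (x + y):] = [:mconst x:] + [:mconst y:]" by (simp only: a.hom_add b.hom_add)
    show "[:mconst (x * y):] = [:mconst x:] * [:mconst y:]" by (simp only: a.hom_mult b.hom_mult)
    show "[:mconst (1::'b):] = 1" by (simp only: a.hom_one b.hom_one)
    show "[:mconst (0::'b):] = 0" by (simp only: a.hom_zero b.hom_zero)
  qed
qed

definition phi :: "nat \<Rightarrow> 'a::comm_ring_1 mpoly \<Rightarrow> 'a mpoly poly" where
  "phi n = meval (\<lambda>c. [:mconst c:]) (\<lambda>v. if v = n then [:0,1:] else [:mvar v:])"

lemma phi_hom: "comm_ring_hom (phi n)"
  unfolding phi_def by (rule meval_hom[OF kappa_hom])

lemma phi_mvar[simp]: "phi n (mvar v) = (if v = n then [:0,1:] else [:mvar v:])"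
proof -
  interpret k: comm_ring_hom "\<lambda>c::'a. [:mconst c:]" by (rule kappa_hom)
  show ?thesis unfolding phi_def by (rule meval_mvar) (rule k.hom_zero, rule k.hom_one)
qed

lemma phi_mconst[simp]: "phi n (mconst c) = [:mconst c:]"
proof -
  interpret k: comm_ring_hom "\<lambda>c::'a. [:mconst c:]" by (rule kappa_hom)
  show ?thesis unfolding phi_def by (rule meval_mconst) (rule k.hom_zero)
qed

lemma phi_lsum: "j \<le> n \<Longrightarrow> phi n (lsum c j) = [:lsum c j:]"
proof -
  assume jn: "j \<le> n"
  interpret comm_ring_hom "phi n" by (rule phi_hom)
  interpret c: comm_ring_hom "\<lambda>x::'a mpoly. [:x:]" by (rule cpoly_hom)
  have "phi n (lsum c j) = (\<Sum>i<j. phi n (mconst (c i)) * phi n (mvar i))"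
    unfolding lsum_def by (simp only: hom_sum hom_mult)
  also have "\<dots> = (\<Sum>i<j. [:mconst (c i) * mvar i:])"
  proof (rule sum.cong[OF refl])
    fix i assume "i \<in> {..<j}"
    then have "i \<noteq> n" using jn by auto
    then have h: "phi n (mvar i) = [:mvar i:]" by simp
    show "phi n (mconst (c i)) * phi n (mvar i) = [:mconst (c i) * mvar i:]"
      by (simp only: phi_mconst c.hom_mult h)
  qed
  also have "\<dots> = [:lsum c j:]" unfolding lsum_def by (rule c.hom_sum[symmetric])
  finally show ?thesis .
qed

lemma psi_hom: "comm_ring_hom (\<lambda>p::'b::comm_ring_1 poly. poly p x)"
proof
  fix p q :: "'b poly"
  show "poly (p + q) x = poly p x + poly q x" by (rule poly_add)
  show "poly (p * q) x = poly p x * poly q x" by (rule poly_mult)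
  show "poly 1 x = 1" by (rule poly_1)
  show "poly 0 x = 0" by (rule poly_0)
qed

lemma psi_phi: "poly (phi n P) (mvar n) = P"
proof -
  have "poly (phi n P) (mvar n) = meval ((\<lambda>p. poly p (mvar n)) \<circ> (\<lambda>c. [:mconst c:]))
      ((\<lambda>p. poly p (mvar n)) \<circ> (\<lambda>v. if v = n then [:0,1:] else [:mvar v:])) P"
    unfolding phi_def by (rule meval_comp[OF psi_hom])
  also have "((\<lambda>p. poly p (mvar n)) \<circ> (\<lambda>c. [:mconst c:])) = mconst" by (auto simp: fun_eq_iff)
  also have "((\<lambda>p. poly p (mvar n)) \<circ> (\<lambda>v. if v = n then [:0,1:] else [:mvar v:])) = mvar"
    by (auto simp: fun_eq_iff)
  finally show ?thesis by (simp add: meval_id)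
qed

lemma lform_ne: "lform j c \<noteq> (0 :: 'a::comm_ring_1 mpoly)"
proof -
  have "Poly_Mapping.lookup (lform j c) (Poly_Mapping.single j 1) = 1"
    unfolding lform_def using lookup_lsum[of c j j] lookup_mvar1[of j j] by (simp add: lookup_minus)
  then show ?thesis by auto
qed

definition MM :: "nat \<Rightarrow> 'a::{finite,field} mpoly mat" where
  "MM n = mat n n (\<lambda>(r, k). mvar k ^ (card (UNIV :: 'a set) ^ r))"

lemma mooreL_MM: "mooreL n = det (MM n)"
  by (simp add: mooreL_def MM_def)

definition Fam :: "nat \<Rightarrow> (nat \<times> (nat \<Rightarrow> 'a)) set" where
  "Fam n = Sigma {..<n} Lam"

lemma finite_Lam: "finite (Lam j :: (nat \<Rightarrow> 'a::finite) set)"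
  by (intro finite_PiE) auto

lemma finite_Fam: "finite (Fam n :: (nat \<times> (nat \<Rightarrow> 'a::finite)) set)"
  unfolding Fam_def by (intro finite_SigmaI finite_Lam) auto

lemma card_Lam: "card (Lam j :: (nat \<Rightarrow> 'a::finite) set) = card (UNIV :: 'a set) ^ j"
  by (simp add: card_PiE)

lemma Fam_Suc: "Fam (Suc n) = Fam n \<union> ({n} \<times> Lam n)"
  unfolding Fam_def lessThan_Suc by blast
lemma Fam_distinct:
  assumes "x \<in> Fam n" "y \<in> Fam n" "x \<noteq> y"
  shows "lsub (fst x) (snd x) (lform (fst y) (snd y)) \<noteq> (0::'a::comm_ring_1 mpoly)"
proof -
  have "snd x \<in> Lam (fst x)" "snd y \<in> Lam (fst y)" using assms(1,2) unfolding Fam_def by (metis mem_Sigma_iff prod.collapse)+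
  moreover have "(fst x, snd x) \<noteq> (fst y, snd y)" using assms(3) by simp
  ultimately show ?thesis by (rule lsub_lform_ne)
qed


lemma lsub_moore_zero:
  fixes c :: "nat \<Rightarrow> 'a::{finite,field}"
  shows "lsub n c (mooreL (Suc n) :: 'a mpoly) = 0"
proof -
  interpret comm_ring_hom "lsub n c :: 'a mpoly \<Rightarrow> 'a mpoly" by (rule lsub_hom)
  define A where "A = map_mat (lsub n c) (MM (Suc n) :: 'a mpoly mat)"
  have A: "A \<in> carrier_mat (Suc n) (Suc n)" by (simp add: A_def MM_def)
  have Aent: "A $$ (r,k) = (if k = n then lsum c n ^ (card (UNIV :: 'a set) ^ r) else mvar k ^ (card (UNIV :: 'a set) ^ r))"
    if "r < Suc n" "k < Suc n" for r k
    using that by (simp add: A_def MM_def hom_distribs)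
  have "det A = 0 * cofactor A n n"
  proof (rule det_col_comb[OF A refl, of n "{..<n}" "\<lambda>i. mconst (c i)"])
    fix r assume r: "r < Suc n"
    have "A $$ (r, n) = (\<Sum>i<n. mconst (c i) * mvar i ^ (card (UNIV :: 'a set) ^ r))"
      using r by (simp add: Aent lsum_def frob_lin)
    also have "\<dots> = (\<Sum>i<n. mconst (c i) * A $$ (r, i))"
      by (rule sum.cong) (use r in \<open>auto simp: Aent\<close>)
    finally show "A $$ (r, n) = (\<Sum>i\<in>{..<n}. mconst (c i) * A $$ (r, i)) + (if r = n then 0 else 0)" by simp
  qed auto
  then show ?thesis by (simp add: mooreL_MM A_def)
qed

lemma MM_delete: "mat_delete (MM (Suc n)) n n = MM n"
  unfolding mat_delete_def MM_def by (intro eq_matI) auto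

lemma phi_moore:
  fixes n :: nat
  defines "q \<equiv> card (UNIV :: 'a::{finite,field} set)"
  shows "\<exists>C. phi n (mooreL (Suc n) :: 'a mpoly) = (\<Sum>r<Suc n. monom (C r) (q ^ r)) \<and> C n = mooreL n"
proof -
  interpret comm_ring_hom "phi n :: 'a mpoly \<Rightarrow> 'a mpoly poly" by (rule phi_hom)
  interpret c: comm_ring_hom "\<lambda>x::'a mpoly. [:x:]" by (rule cpoly_hom)
  define A where "A = map_mat (phi n) (MM (Suc n) :: 'a mpoly mat)"
  have A: "A \<in> carrier_mat (Suc n) (Suc n)" by (simp add: A_def MM_def)
  define C where "C r = cofactor (MM (Suc n) :: 'a mpoly mat) r n" for r
  have cof: "cofactor A r n = [:C r:]" if "r < Suc n" for r
  proof -
    have mdel: "mat_delete A r n = map_mat (\<lambda>x. [:x:]) (mat_delete (MM (Suc n)) r n)"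
      unfolding mat_delete_def A_def MM_def using that by (intro eq_matI) (auto simp: hom_power c.hom_power[symmetric])
    show ?thesis by (simp only: cofactor_def C_def mdel c.hom_det c.hom_mult c.hom_power c.hom_uminus c.hom_one)
  qed
  have "phi n (mooreL (Suc n)) = det A" by (simp add: mooreL_MM A_def)
  also have "\<dots> = (\<Sum>r<Suc n. A $$ (r, n) * cofactor A r n)"
    by (rule laplace_expansion_column[OF A]) simp
  also have "\<dots> = (\<Sum>r<Suc n. monom (C r) (q ^ r))"
  proof (rule sum.cong[OF refl])
    fix r assume "r \<in> {..<Suc n}"
    then have r: "r < Suc n" by simp
    have "A $$ (r, n) = [:0,1:] ^ (q ^ r)" using r by (simp add: A_def MM_def hom_distribs q_def)
    then show "A $$ (r, n) * cofactor A r n = monom (C r) (q ^ r)"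
      using r by (simp add: cof monom_altdef mult.commute)
  qed
  finally have "phi n (mooreL (Suc n)) = (\<Sum>r<Suc n. monom (C r) (q ^ r))" .
  moreover have "C n = mooreL n"
    unfolding C_def cofactor_def MM_delete by (simp add: mooreL_MM)
  ultimately show ?thesis by blast
qed

lemma moore_formula:
  "mooreL n = (\<Prod>y\<in>Fam n. lform (fst y) (snd y) :: 'a::{finite,field} mpoly)"
proof (induction n)
  case 0
  show ?case by (simp add: mooreL_MM MM_def Fam_def)
next
  case (Suc n)
  define q where "q = card (UNIV :: 'a set)"
  have q1: "q > 1" using card_ge2[where 'a='a] by (simp add: q_def)
  define F where "F = ({n} \<times> Lam n :: (nat \<times> (nat \<Rightarrow> 'a)) set)"
  have finF: "finite F" unfolding F_def by (simp add: finite_Lam)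
  define V where "V = (\<Prod>y\<in>F. lform (fst y) (snd y) :: 'a mpoly)"
  define Ln where "Ln = (mooreL n :: 'a mpoly)"
  have Ln0: "Ln \<noteq> 0"
  proof -
    have "\<forall>y\<in>Fam n. lform (fst y) (snd y) \<noteq> (0::'a mpoly)" using lform_ne by blast
    then show ?thesis unfolding Ln_def Suc.IH by (simp add: prod_zero_iff[OF finite_Fam])
  qed
  have Fmem: "\<And>x. x \<in> F \<Longrightarrow> fst x = n \<and> snd x \<in> Lam n" unfolding F_def by (simp add: mem_Times_iff)
  have "V dvd mooreL (Suc n)"
    unfolding V_def
  proof (rule prod_lform_dvd[OF finF])
    fix x y assume "x \<in> F" "y \<in> F" "x \<noteq> y"
    then show "lsub (fst x) (snd x) (lform (fst y) (snd y)) \<noteq> (0::'a mpoly)"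
      using Fmem[of x] Fmem[of y] by (intro lsub_lform_ne) (simp_all add: prod_eq_iff)
  next
    fix x assume "x \<in> F"
    then show "lsub (fst x) (snd x) (mooreL (Suc n) :: 'a mpoly) = 0"
      using Fmem[of x] lsub_moore_zero by metis
  qed
  then obtain Q where Q: "mooreL (Suc n) = V * Q" by (auto simp: dvd_def)
  interpret comm_ring_hom "phi n :: 'a mpoly \<Rightarrow> 'a mpoly poly" by (rule phi_hom)
  obtain C where C: "phi n (mooreL (Suc n) :: 'a mpoly) = (\<Sum>r<Suc n. monom (C r) (q ^ r))" "C n = Ln"
    using phi_moore[where 'a='a, of n] unfolding q_def Ln_def by blast
  define P where "P = phi n (mooreL (Suc n) :: 'a mpoly)"
  have coeffP: "coeff P (q ^ n) = Ln"
  proof -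
    have "coeff P (q ^ n) = (\<Sum>r<Suc n. if q ^ r = q ^ n then C r else 0)"
      unfolding P_def C(1) by (simp add: coeff_sum coeff_monom)
    also have "\<dots> = (\<Sum>r<Suc n. if r = n then C r else 0)"
      using q1 by (intro sum.cong) auto
    also have "\<dots> = Ln" using C(2) by simp
    finally show ?thesis .
  qed
  have degP: "degree P = q ^ n"
  proof (rule antisym)
    show "degree P \<le> q ^ n"
      unfolding P_def C(1)
    proof (rule degree_sum_le)
      fix r assume "r \<in> {..<Suc n}"
      then have "q ^ r \<le> q ^ n" using q1 by (intro power_increasing) auto
      then show "degree (monom (C r) (q ^ r)) \<le> q ^ n" using degree_monom_le order_trans by blast
    qed simp
    show "q ^ n \<le> degree P" using coeffP Ln0 by (intro le_degree) simp
  qed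
  have lcP: "lead_coeff P = Ln" using degP coeffP by simp
  have phiV: "phi n V = (\<Prod>y\<in>F. [:- lsum (snd y) n, 1:])"
    unfolding V_def
  proof (rule trans[OF hom_prod prod.cong[OF refl]])
    fix y assume "y \<in> F"
    then have "fst y = n" using Fmem by blast
    then show "phi n (lform (fst y) (snd y)) = [:- lsum (snd y) n, 1:]"
      by (simp add: lform_def hom_minus phi_lsum)
  qed
  have degV: "degree (phi n V) = q ^ n"
  proof -
    have "degree (\<Prod>y\<in>F. [:- lsum (snd y) n, 1:]) = (\<Sum>y\<in>F. degree [:- lsum (snd y) n, 1:])"
      by (rule degree_prod_eq_sum_degree) simp
    also have "\<dots> = card F" by simp
    also have "card F = q ^ n" unfolding F_def q_def by (simp add: card_cartesian_product card_Lam)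
    finally show ?thesis unfolding phiV .
  qed
  have lcV: "lead_coeff (phi n V) = 1"
    unfolding phiV by (simp add: lead_coeff_prod)
  have PVQ: "P = phi n V * phi n Q" unfolding P_def Q by (simp add: hom_mult)
  have "P \<noteq> 0" using coeffP Ln0 by auto
  then have Q0: "phi n Q \<noteq> 0" "phi n V \<noteq> 0" using PVQ by auto
  have "degree P = degree (phi n V) + degree (phi n Q)"
    unfolding PVQ by (rule degree_mult_eq[OF Q0(2) Q0(1)])
  then have dQ: "degree (phi n Q) = 0" using degP degV by simp
  have "Ln = lead_coeff (phi n V) * lead_coeff (phi n Q)"
    using lcP PVQ by (simp add: lead_coeff_mult)
  then have "coeff (phi n Q) 0 = Ln" using lcV dQ by simp
  then have "phi n Q = [:Ln:]" using degree_0_id[OF dQ] by simp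
  then have "Q = Ln" using psi_phi[of n Q] by simp
  then have "mooreL (Suc n) = (\<Prod>y\<in>Fam n. lform (fst y) (snd y)) * V"
    using Q Suc.IH unfolding Ln_def by (simp add: mult.commute)
  also have "\<dots> = (\<Prod>y\<in>Fam (Suc n). lform (fst y) (snd y))"
    unfolding V_def Fam_Suc F_def[symmetric]
  proof (rule prod.union_disjoint[symmetric, OF finite_Fam finF])
    show "Fam n \<inter> F = {}"
    proof (rule ccontr)
      assume "Fam n \<inter> F \<noteq> {}"
      then obtain x where "x \<in> Fam n" "x \<in> F" by blast
      then show False using Fmem[of x] unfolding Fam_def by (simp add: mem_Sigma_iff[of "fst x" "snd x", simplified])
    qed
  qed
  finally show ?case .
qed

lemma mooreL_ne: "mooreL n \<noteq> (0 :: 'a::{finite,field} mpoly)"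
  unfolding moore_formula using finite_Fam lform_ne by (subst prod_zero_iff) auto


definition NM :: "nat \<Rightarrow> nat \<Rightarrow> 'a::{finite,field} mpoly \<Rightarrow> 'a mpoly mat" where
  "NM n b f = mat n n (\<lambda>(r, k).
      if r < n - 1 then mvar k ^ (card (UNIV :: 'a set) ^ r)
      else mvar k ^ (card (UNIV :: 'a set) ^ b) * omit_var k f)"

lemma deltaN_NM: "deltaN n b f = det (NM n b f)"
  by (simp add: deltaN_def NM_def)

definition Dj :: "nat \<Rightarrow> (nat \<Rightarrow> 'a) \<Rightarrow> nat \<Rightarrow> 'a::{finite,field} mpoly \<Rightarrow> 'a mpoly" where
  "Dj j c b f = lsub j c (mvar j ^ (card (UNIV :: 'a set) ^ b) * omit_var j f)
     - (\<Sum>i<j. mconst (c i) * lsub j c (mvar i ^ (card (UNIV :: 'a set) ^ b) * omit_var i f))"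

lemma lsub_deltaN:
  fixes f :: "'a::{finite,field} mpoly"
  assumes j: "j < n"
  shows "lsub j c (deltaN n b f) = Dj j c b f * cofactor (map_mat (lsub j c) (NM n b f)) (n - 1) j"
proof -
  interpret comm_ring_hom "lsub j c :: 'a mpoly \<Rightarrow> 'a mpoly" by (rule lsub_hom)
  define A where "A = map_mat (lsub j c) (NM n b f)"
  have A: "A \<in> carrier_mat n n" by (simp add: A_def NM_def)
  have nS: "n = Suc (n - 1)" using j by simp
  have "det A = Dj j c b f * cofactor A (n - 1) j"
  proof (rule det_col_comb[OF A nS j, of "{..<j}" "\<lambda>i. mconst (c i)"])
    show "{..<j} \<subseteq> {..<n} - {j}" using j by auto
  next
    fix r assume r: "r < n"
    show "A $$ (r, j) = (\<Sum>i\<in>{..<j}. mconst (c i) * A $$ (r, i)) + (if r = n - 1 then Dj j c b f else 0)"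
    proof (cases "r < n - 1")
      case True
      have "A $$ (r, j) = (\<Sum>i<j. mconst (c i) * mvar i ^ (card (UNIV :: 'a set) ^ r))"
        using True j by (simp add: A_def NM_def hom_distribs lsum_def frob_lin)
      also have "\<dots> = (\<Sum>i<j. mconst (c i) * A $$ (r, i))"
        by (rule sum.cong) (use True j in \<open>auto simp: A_def NM_def hom_distribs\<close>)
      finally show ?thesis using True by simp
    next
      case False
      then have rn: "r = n - 1" using r by simp
      have "A $$ (r, j) = lsub j c (mvar j ^ (card (UNIV :: 'a set) ^ b) * omit_var j f)"
        using rn j by (simp add: A_def NM_def)
      moreover have "(\<Sum>i<j. mconst (c i) * A $$ (r, i)) =
          (\<Sum>i<j. mconst (c i) * lsub j c (mvar i ^ (card (UNIV :: 'a set) ^ b) * omit_var i f))"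
        by (rule sum.cong) (use rn j in \<open>auto simp: A_def NM_def\<close>)
      ultimately show ?thesis using rn by (simp add: Dj_def)
    qed
  qed
  then show ?thesis by (simp add: deltaN_NM A_def)
qed

definition ins :: "nat \<Rightarrow> nat \<Rightarrow> nat" where
  "ins j k = (if k < j then k else Suc k)"

lemma ins_inj: "ins j k = ins j k' \<longleftrightarrow> k = k'"
  by (auto simp: ins_def)

lemma cofactor_ne:
  fixes f :: "'a::{finite,field} mpoly"
  assumes j: "j < n"
  shows "cofactor (map_mat (lsub j c) (NM n b f)) (n - 1) j \<noteq> 0"
proof -
  define h :: "'a mpoly \<Rightarrow> 'a mpoly" where "h = meval mconst (\<lambda>k. mvar (ins j k))"
  interpret comm_ring_hom h unfolding h_def by (rule meval_hom[OF mconst_hom])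
  interpret l: comm_ring_hom "lsub j c :: 'a mpoly \<Rightarrow> 'a mpoly" by (rule lsub_hom)
  have hmvar: "h (mvar k) = mvar (ins j k)" for k
    unfolding h_def by (rule meval_mvar) (simp_all add: mconst_def)
  have hmconst: "h (mconst d) = mconst d" for d
    unfolding h_def by (rule meval_mconst) (simp add: mconst_def)
  have "mat_delete (map_mat (lsub j c) (NM n b f)) (n - 1) j = map_mat h (MM (n - 1))"
    unfolding mat_delete_def NM_def MM_def using j
    by (intro eq_matI) (auto simp: l.hom_power hom_power hmvar ins_def)
  then have "det (mat_delete (map_mat (lsub j c) (NM n b f)) (n - 1) j) = h (mooreL (n - 1))"
    by (simp add: mooreL_MM)
  also have "\<dots> = (\<Prod>y\<in>Fam (n - 1). h (lform (fst y) (snd y)))"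
    by (simp add: moore_formula hom_prod)
  also have "\<dots> \<noteq> 0"
  proof -
    have "h (lform j' d) \<noteq> 0" for j' d
    proof -
      have e: "h (lform j' d) = mvar (ins j j') - (\<Sum>i<j'. mconst (d i) * mvar (ins j i))"
        by (simp add: lform_def lsum_def hom_distribs hmvar hmconst)
      have "Poly_Mapping.lookup (\<Sum>i<j'. mconst (d i) * mvar (ins j i)) (Poly_Mapping.single (ins j j') 1)
          = (\<Sum>i\<in>{i\<in>{..<j'}. ins j i = ins j j'}. d i)"
        by (rule lookup_lin) simp
      also have "{i\<in>{..<j'}. ins j i = ins j j'} = {}" by (auto simp: ins_inj)
      finally have "Poly_Mapping.lookup (h (lform j' d)) (Poly_Mapping.single (ins j j') 1) = 1"
        unfolding e using lookup_mvar1[of "ins j j'" "ins j j'"] by (simp add: lookup_minus)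
      then show ?thesis by auto
    qed
    then have "\<forall>y\<in>Fam (n - 1). h (lform (fst y) (snd y)) \<noteq> 0" by blast
    then show ?thesis by (simp add: prod_zero_iff[OF finite_Fam])
  qed
  finally show ?thesis by (simp add: cofactor_def)
qed


lemma restrict_omit:
  fixes f :: "'a::{finite,field} mpoly"
  assumes f: "mvars f \<subseteq> {..<c}" and k: "k \<le> c"
  shows "meval mconst (\<lambda>v. if v \<in> {..<c+1} then mvar v else 0) (omit_var k f) = omit_var k f"
proof -
  let ?\<rho> = "meval mconst (\<lambda>v. if v \<in> {..<c+1} then mvar v else (0::'a mpoly))"
  let ?\<sigma> = "\<lambda>j. mvar (if j < k then j else Suc j) :: 'a mpoly"
  interpret comm_ring_hom ?\<rho> by (rule meval_hom[OF mconst_hom])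
  have rc: "?\<rho> \<circ> mconst = mconst" by (rule ext) (simp only: comp_def meval_mconst[where \<kappa>=mconst, OF mconst_0])
  have "?\<rho> (omit_var k f) = meval (?\<rho> \<circ> mconst) (?\<rho> \<circ> ?\<sigma>) f"
    unfolding omit_var_def msubst_meval by (rule meval_comp) unfold_locales
  also have "\<dots> = meval mconst ?\<sigma> f"
    unfolding rc
  proof (rule meval_cong)
    fix v assume "v \<in> mvars f"
    then have "v < c" using f by auto
    then show "(?\<rho> \<circ> ?\<sigma>) v = ?\<sigma> v"
      by (simp add: meval_mvar mconst_def)
  qed
  also have "\<dots> = omit_var k f" unfolding omit_var_def msubst_meval ..
  finally show ?thesis .
qed

lemma restrict_mat_fixed:
  fixes M :: "'a::{finite,field} mpoly mat"
  assumes M: "M \<in> carrier_mat n n"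
    and fx: "\<And>r k. r < n \<Longrightarrow> k < n \<Longrightarrow>
       meval mconst (\<lambda>v. if v \<in> {..<c+1} then mvar v else 0) (M $$ (r,k)) = M $$ (r,k)"
  shows "meval mconst (\<lambda>v. if v \<in> {..<c+1} then mvar v else 0) (det M) = det M"
proof -
  let ?\<rho> = "meval mconst (\<lambda>v. if v \<in> {..<c+1} then mvar v else (0::'a mpoly))"
  interpret comm_ring_hom ?\<rho> by (rule meval_hom[OF mconst_hom])
  have "map_mat ?\<rho> M = M" using M fx by (intro eq_matI) auto
  then show ?thesis using hom_det[of M] by simp
qed

lemma rho_mvar: "meval mconst (\<lambda>v. if v \<in> {..<c+1} then mvar v else 0) (mvar k) =
   (if k \<in> {..<c+1} then mvar k else (0::'a::comm_ring_1 mpoly))"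
  by (rule meval_mvar) (simp_all add: mconst_0 mconst_1)

theorem mainTheorem10:
  fixes f :: "'a::{finite,field} mpoly" and a b c :: nat
  assumes "1 \<le> a" and "a \<le> c + 1"
    and "mvars f \<subseteq> {..<c}"
    and "is_poly_in (c + 1) (delta a b f)"
  shows "\<forall>a'. 1 \<le> a' \<and> a' < a \<longrightarrow> is_poly_in (c + 1) (delta a' b f)"
proof (intro allI impI)
  fix a' assume a': "1 \<le> a' \<and> a' < a"
  from assms(4) obtain p where p: "mvars p \<subseteq> {..<c+1}" "delta a b f = Fract p 1"
    by (auto simp: is_poly_in_def)
  have "deltaN a b f = p * mooreL a"
  proof -
    have "Fract (deltaN a b f) (mooreL a) = Fract p 1" using p(2) unfolding delta_def .
    then have "deltaN a b f * 1 = p * mooreL a"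
      using eq_fract(1)[OF mooreL_ne one_neq_zero, of "deltaN a b f" a p] by blast
    then show ?thesis by simp
  qed
  then have NL: "deltaN a b f = mooreL a * p" by (simp only: mult.commute)
  have Dz: "Dj j c' b f = 0" if j: "j < a" and c': "c' \<in> Lam j" for j c'
  proof -
    interpret comm_ring_hom "lsub j c' :: 'a mpoly \<Rightarrow> 'a mpoly" by (rule lsub_hom)
    have "(j, c') \<in> Fam a" unfolding Fam_def using j c' by simp
    then have "lform j c' dvd mooreL a" unfolding moore_formula
      using dvd_prodI[OF finite_Fam, of "(j, c')" a "\<lambda>y. lform (fst y) (snd y)"] by simp
    then have "lsub j c' (mooreL a) = 0" by (rule dvd_imp_lsub_zero)
    then have "lsub j c' (deltaN a b f) = 0" unfolding NL by (simp add: hom_mult)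
    then have "Dj j c' b f * cofactor (map_mat (lsub j c') (NM a b f)) (a - 1) j = 0"
      using lsub_deltaN[OF j, of c' b f] by metis
    then show ?thesis using cofactor_ne[OF j, of c' b f] by (metis mult_eq_0_iff)
  qed
  have "(\<Prod>y\<in>Fam a'. lform (fst y) (snd y)) dvd deltaN a' b f"
  proof (rule prod_lform_dvd[OF finite_Fam])
    fix x y :: "nat \<times> (nat \<Rightarrow> 'a)" assume "x \<in> Fam a'" "y \<in> Fam a'" "x \<noteq> y"
    then show "lsub (fst x) (snd x) (lform (fst y) (snd y)) \<noteq> 0" by (rule Fam_distinct)
  next
    fix x :: "nat \<times> (nat \<Rightarrow> 'a)" assume x: "x \<in> Fam a'"
    then have xj: "fst x < a'" "snd x \<in> Lam (fst x)" unfolding Fam_def by (metis mem_Sigma_iff prod.collapse lessThan_iff)+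
    have "lsub (fst x) (snd x) (deltaN a' b f) = Dj (fst x) (snd x) b f * cofactor (map_mat (lsub (fst x) (snd x)) (NM a' b f)) (a' - 1) (fst x)"
      by (rule lsub_deltaN[OF xj(1)])
    also have "Dj (fst x) (snd x) b f = 0" using Dz xj a' by simp
    finally show "lsub (fst x) (snd x) (deltaN a' b f) = 0" by simp
  qed
  then obtain p' where p': "deltaN a' b f = mooreL a' * p'"
    unfolding moore_formula[symmetric] by (auto simp: dvd_def)
  let ?\<rho> = "meval mconst (\<lambda>v. if v \<in> {..<c+1} then mvar v else (0::'a mpoly))"
  interpret comm_ring_hom ?\<rho> by (rule meval_hom[OF mconst_hom])
  have a'c: "a' \<le> c" using a' assms(2) by simp
  have rN: "?\<rho> (deltaN a' b f) = deltaN a' b f"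
    unfolding deltaN_NM
  proof (rule restrict_mat_fixed)
    show "NM a' b f \<in> carrier_mat a' a'" by (simp add: NM_def)
  next
    fix r k assume "r < a'" "k < a'"
    then have k: "k < c + 1" "k \<le> c" using a'c by auto
    have rm: "?\<rho> (mvar k) = mvar k" using rho_mvar[of c k] k by simp
    have ro: "?\<rho> (omit_var k f) = omit_var k f" by (rule restrict_omit[OF assms(3) k(2)])
    have e: "NM a' b f $$ (r, k) = (if r < a' - 1 then mvar k ^ (card (UNIV :: 'a set) ^ r)
      else mvar k ^ (card (UNIV :: 'a set) ^ b) * omit_var k f)"
      using \<open>r < a'\<close> \<open>k < a'\<close> by (simp add: NM_def)
    show "?\<rho> (NM a' b f $$ (r, k)) = NM a' b f $$ (r, k)"
      unfolding e by (cases "r < a' - 1") (simp_all only: if_True if_False hom_mult hom_power rm ro)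
  qed
  have rL: "?\<rho> (mooreL a') = mooreL a'"
    unfolding mooreL_MM
  proof (rule restrict_mat_fixed)
    show "(MM a' :: 'a mpoly mat) \<in> carrier_mat a' a'" by (simp add: MM_def)
  next
    fix r k assume "r < a'" "k < a'"
    then have k: "k < c + 1" using a'c by auto
    have rm: "?\<rho> (mvar k) = mvar k" using rho_mvar[of c k] k by simp
    have e: "(MM a' :: 'a mpoly mat) $$ (r, k) = mvar k ^ (card (UNIV :: 'a set) ^ r)"
      using \<open>r < a'\<close> \<open>k < a'\<close> by (simp add: MM_def)
    show "?\<rho> ((MM a' :: 'a mpoly mat) $$ (r, k)) = (MM a' :: 'a mpoly mat) $$ (r, k)"
      unfolding e by (simp only: hom_power rm)
  qed
  have "mooreL a' * ?\<rho> p' = ?\<rho> (mooreL a') * ?\<rho> p'" by (simp only: rL)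
  also have "\<dots> = ?\<rho> (deltaN a' b f)" by (simp only: p' hom_mult)
  also have "\<dots> = mooreL a' * p'" by (rule trans[OF rN p'])
  finally have "mooreL a' * ?\<rho> p' = mooreL a' * p'" .
  then have "?\<rho> p' = p'" using mooreL_ne[of a', where 'a='a] by (simp only: mult_cancel_left) blast
  then have vars: "mvars p' \<subseteq> {..<c+1}" by (rule restrict_fixed_imp_mvars)
  have "delta a' b f = Fract p' 1"
  proof -
    have "deltaN a' b f = p' * mooreL a'" using p' by (simp only: mult.commute)
    then have "deltaN a' b f * 1 = p' * mooreL a'" by simp
    then show ?thesis unfolding delta_def
      using eq_fract(1)[OF mooreL_ne one_neq_zero, of "deltaN a' b f" a' p'] by blast
  qed
  then show "is_poly_in (c + 1) (delta a' b f)" unfolding is_poly_in_def using vars by blast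
qed


end
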